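(* Let $f:X\to Y$ be a local homeomorphism between metric spaces, where $X$ is complete and $Y$ is path-connected and locally $\mathcal R$-contractible. Suppose that (1) for every bounded subset $B$ of $X$, $\inf_{x\in B}D_x^-f>0$; and (2) for some $y_0\in Y$ and $x_0\in X$, $d(f(x),y_0)\to\infty$ as $d(x,x_0)\to\infty$. Then $f$ is a covering projection.
   Context: A path $p:[0,1]\to Y$ is rectifiable if its length $\sup\sum_i d(p(t_i),p(t_{i+1}))$ (over partitions of $[0,1]$) is finite. $Y$ is locally $\mathcal R$-contractible if every $y_0\in Y$ has an open neighborhood $U$ with a continuous homotopy $H:U\times[0,1]\to U$ such that $H(y_0,t)=y_0$ for all $t$, $H(y,0)=y_0$, $H(y,1)=y$ for all $y\in U$, and each path $t\mapsto H(y,t)$ is rectifiable. For non-isolated $x\in X$, $D_x^-f=\liminf_{z\to x,\,z\neq x}\frac{d(f(z),f(x))}{d(z,x)}$; $X$ is assumed to have no isolated points. *)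

theory Defs
  imports "HOL-Analysis.Analysis"
begin

definition local_homeo :: "('a::topological_space \<Rightarrow> 'b::topological_space) \<Rightarrow> bool" where
  "local_homeo f \<longleftrightarrow>
     (\<forall>x. \<exists>U. open U \<and> x \<in> U \<and> open (f ` U) \<and> (\<exists>g. homeomorphism U (f ` U) f g))"

definition rectifiable_path :: "(real \<Rightarrow> 'a::metric_space) \<Rightarrow> bool" where
  "rectifiable_path p \<longleftrightarrow>
     (\<exists>M. \<forall>(n::nat) (t::nat \<Rightarrow> real).
        (\<forall>i\<le>n. t i \<in> {0..1}) \<and> (\<forall>i<n. t i \<le> t (Suc i)) \<longrightarrow>
        (\<Sum>i<n. dist (p (t i)) (p (t (Suc i)))) \<le> M)"

definition locally_R_contractible :: "'a::metric_space set \<Rightarrow> bool" where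
  "locally_R_contractible Y \<longleftrightarrow>
     (\<forall>y0\<in>Y. \<exists>U. openin (top_of_set Y) U \<and> y0 \<in> U \<and>
        (\<exists>H. continuous_on (U \<times> {0..1}) H \<and> H ` (U \<times> {0..1}) \<subseteq> U \<and>
             (\<forall>t\<in>{0..1}. H (y0, t) = y0) \<and>
             (\<forall>y\<in>U. H (y, 0) = y0 \<and> H (y, 1) = y \<and> rectifiable_path (\<lambda>t. H (y, t)))))"

definition lower_deriv :: "('a::metric_space \<Rightarrow> 'b::metric_space) \<Rightarrow> 'a \<Rightarrow> ereal" where
  "lower_deriv f x = Liminf (at x) (\<lambda>z. ereal (dist (f z) (f x) / dist z x))"

end

theory Submission
  imports Defs
begin


lemma lh_nbhd:
  assumes "local_homeo f"
  obtains V g where "open V" "x \<in> V" "open (f ` V)" "homeomorphism V (f ` V) f g"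
  using assms unfolding local_homeo_def by blast

lemma lh_cont:
  fixes f :: "'a::metric_space \<Rightarrow> 'b::metric_space"
  assumes "local_homeo f" shows "continuous_on UNIV f"
proof -
  have "isCont f x" for x
  proof -
    obtain V g where V: "open V" "x \<in> V" "open (f ` V)" "homeomorphism V (f ` V) f g"
      using lh_nbhd[OF assms] by blast
    then have "continuous_on V f" by (simp add: homeomorphism_def)
    then show ?thesis using V(1,2) continuous_on_eq_continuous_at by blast
  qed
  then show ?thesis by (simp add: continuous_at_imp_continuous_on)
qed

lemma colip:
  fixes f :: "'a::metric_space \<Rightarrow> 'b::metric_space"
  assumes "ereal c < lower_deriv f x"
  shows "\<exists>e>0. \<forall>z. dist z x < e \<longrightarrow> c * dist z x \<le> dist (f z) (f x)"
proof -
  have "eventually (\<lambda>z. ereal c < ereal (dist (f z) (f x) / dist z x)) (at x)"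
    using less_LiminfD[OF assms[unfolded lower_deriv_def]] by simp
  then obtain d where d: "d > 0" "\<And>z. z \<noteq> x \<Longrightarrow> dist z x < d \<Longrightarrow> c < dist (f z) (f x) / dist z x"
    unfolding eventually_at by auto
  show ?thesis
  proof (intro exI[of _ d] conjI allI impI)
    fix z assume z: "dist z x < d"
    show "c * dist z x \<le> dist (f z) (f x)"
    proof (cases "z = x")
      case False
      then have "dist z x > 0" by simp
      with d(2)[OF False z] show ?thesis by (simp add: pos_less_divide_eq less_imp_le)
    qed simp
  qed (rule d(1))
qed

lemma lift_unique:
  fixes f :: "'a::metric_space \<Rightarrow> 'b::metric_space"
  assumes lh: "local_homeo f" and T: "connected T"
    and p: "continuous_on T p" and q: "continuous_on T q"
    and eq: "\<And>t. t \<in> T \<Longrightarrow> f (p t) = f (q t)"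
    and a: "a \<in> T" "p a = q a" and t: "t \<in> T"
  shows "p t = q t"
proof -
  define G where "G = {t \<in> T. dist (p t) (q t) = 0}"
  have c: "closedin (top_of_set T) G"
    unfolding G_def by (intro continuous_closedin_preimage_constant continuous_intros p q)
  have o: "openin (top_of_set T) G"
  proof (subst openin_subopen, intro ballI)
    fix z assume z: "z \<in> G"
    then have zT: "z \<in> T" and pq: "p z = q z" by (auto simp: G_def)
    obtain V g where V: "open V" "p z \<in> V" "open (f ` V)" "homeomorphism V (f ` V) f g"
      using lh_nbhd[OF lh] by blast
    have gV: "\<And>v. v \<in> V \<Longrightarrow> g (f v) = v" using V(4) unfolding homeomorphism_def by blast
    let ?W = "(T \<inter> p -` V) \<inter> (T \<inter> q -` V)"
    have "openin (top_of_set T) ?W"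
      by (intro openin_Int continuous_openin_preimage_gen p q V(1))
    moreover have "z \<in> ?W" using zT pq V(2) by simp
    moreover have "?W \<subseteq> G"
    proof
      fix w assume w: "w \<in> ?W"
      then have "p w \<in> V" "q w \<in> V" "w \<in> T" by simp_all
      then have "p w = q w" using gV eq by metis
      then show "w \<in> G" using \<open>w \<in> T\<close> by (simp add: G_def)
    qed
    ultimately show "\<exists>W. openin (top_of_set T) W \<and> z \<in> W \<and> W \<subseteq> G" by blast
  qed
  have "G = {} \<or> G = T"
    using T c o connected_clopen by blast
  moreover have "a \<in> G" using a by (simp add: G_def)
  ultimately show ?thesis using t by (auto simp: G_def)
qed



lemma real_induct:
  fixes a b :: real
  assumes ab: "a \<le> b" and Pa: "P a"
    and cl: "\<And>s. a < s \<Longrightarrow> s \<le> b \<Longrightarrow> (\<And>u. a \<le> u \<Longrightarrow> u < s \<Longrightarrow> P u) \<Longrightarrow> P s"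
    and st: "\<And>s. a \<le> s \<Longrightarrow> s < b \<Longrightarrow> (\<And>u. a \<le> u \<Longrightarrow> u \<le> s \<Longrightarrow> P u) \<Longrightarrow> \<exists>d>0. \<forall>u. s < u \<and> u < s + d \<longrightarrow> P u"
  shows "P b"
proof -
  define A where "A = {s. a \<le> s \<and> s \<le> b \<and> (\<forall>u. a \<le> u \<and> u \<le> s \<longrightarrow> P u)}"
  define S where "S = Sup A"
  have aA: "a \<in> A" using ab Pa by (auto simp: A_def)
  have bdd: "bdd_above A" unfolding A_def by (rule bdd_aboveI[of _ b]) auto
  have aS: "a \<le> S" unfolding S_def using aA bdd by (rule cSup_upper)
  have Sb: "S \<le> b" unfolding S_def using aA by (intro cSup_least) (auto simp: A_def)
  have below: "P u" if "a \<le> u" "u < S" for u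
  proof -
    obtain s where "s \<in> A" "u < s" using less_cSupD[of A u] aA \<open>u < S\<close> S_def by blast
    then show ?thesis using that by (auto simp: A_def)
  qed
  have PS: "P S"
  proof (cases "S = a")
    case True then show ?thesis using Pa by simp
  next
    case False
    then have "a < S" using aS by simp
    then show ?thesis using cl[OF _ Sb] below by blast
  qed
  have below2: "P u" if "a \<le> u" "u \<le> S" for u
    using below PS that by (cases "u = S") auto
  have "S = b"
  proof (rule ccontr)
    assume "S \<noteq> b"
    then have "S < b" using Sb by simp
    then obtain d where d: "d > 0" "\<And>u. S < u \<Longrightarrow> u < S + d \<Longrightarrow> P u"
      using st[OF aS _ below2] by blast
    define u' where "u' = min (S + d/2) b"
    have "u' \<in> A"
      unfolding A_def
    proof (intro CollectI conjI allI impI)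
      show "a \<le> u'" "u' \<le> b" using aS \<open>S < b\<close> d(1) ab by (auto simp: u'_def)
      fix u assume "a \<le> u \<and> u \<le> u'"
      then show "P u" using below2 d(2)[of u] d(1) by (cases "u \<le> S") (auto simp: u'_def)
    qed
    then have "u' \<le> S" unfolding S_def using bdd by (rule cSup_upper)
    moreover have "S < u'" using \<open>S < b\<close> d(1) by (simp add: u'_def)
    ultimately show False by simp
  qed
  then show ?thesis using PS by simp
qed

definition psum :: "(real \<Rightarrow> 'a::metric_space) \<Rightarrow> nat \<Rightarrow> (nat \<Rightarrow> real) \<Rightarrow> real" where
  "psum g n t = (\<Sum>i<n. dist (g (t i)) (g (t (Suc i))))"

definition ispart :: "real \<Rightarrow> real \<Rightarrow> nat \<Rightarrow> (nat \<Rightarrow> real) \<Rightarrow> bool" where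
  "ispart a b n t \<longleftrightarrow> (\<forall>i\<le>n. t i \<in> {a..b}) \<and> (\<forall>i<n. t i \<le> t (Suc i))"

definition Lf :: "(real \<Rightarrow> 'a::metric_space) \<Rightarrow> real \<Rightarrow> real" where
  "Lf g s = Sup {psum g n t | n t. ispart 0 s n t}"

lemma rect_bound:
  assumes "rectifiable_path g"
  obtains M where "\<And>n t s. s \<le> 1 \<Longrightarrow> ispart 0 s n t \<Longrightarrow> psum g n t \<le> M"
proof -
  obtain M where M: "\<And>n t. (\<forall>i\<le>n. t i \<in> {0..1}) \<and> (\<forall>i<n. t i \<le> t (Suc i)) \<Longrightarrow>
        (\<Sum>i<n. dist (g (t i)) (g (t (Suc i)))) \<le> M"
    using assms unfolding rectifiable_path_def by blast
  show ?thesis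
  proof (rule that)
    fix n t s assume "s \<le> (1::real)" "ispart 0 s n t"
    then show "psum g n t \<le> M" unfolding psum_def ispart_def by (intro M) force
  qed
qed

lemma Lf_bdd:
  assumes "rectifiable_path g" "s \<le> 1"
  shows "bdd_above {psum g n t | n t. ispart 0 s n t}"
proof -
  obtain M where "\<And>n t s. s \<le> 1 \<Longrightarrow> ispart 0 s n t \<Longrightarrow> psum g n t \<le> M"
    using rect_bound[OF assms(1)] by blast
  then show ?thesis using assms(2) by (intro bdd_aboveI[of _ M]) blast
qed

lemma Lf_ne:
  assumes "0 \<le> s"
  shows "{psum g n t | n t. ispart 0 s n t} \<noteq> {}"
proof -
  have "ispart 0 s 0 (\<lambda>_. 0)" using assms by (simp add: ispart_def)
  then show ?thesis by blast
qed

lemma Lf_upper: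
  assumes "rectifiable_path g" "s \<le> 1" "ispart 0 s n t"
  shows "psum g n t \<le> Lf g s"
  unfolding Lf_def using assms by (intro cSup_upper Lf_bdd) blast+

lemma Lf_least:
  assumes "0 \<le> s" "\<And>n t. ispart 0 s n t \<Longrightarrow> psum g n t \<le> C"
  shows "Lf g s \<le> C"
  unfolding Lf_def using assms Lf_ne[OF assms(1)] by (intro cSup_least) blast+

lemma Lf_add:
  assumes r: "rectifiable_path g" and ab: "0 \<le> a" "a \<le> b" "b \<le> 1"
  shows "Lf g a + dist (g a) (g b) \<le> Lf g b"
proof -
  have "psum g n t \<le> Lf g b - dist (g a) (g b)" if P: "ispart 0 a n t" for n t
  proof -
    define t' where "t' = (\<lambda>i. if i \<le> n then t i else if i = Suc n then a else b)"
    have "ispart 0 b (Suc (Suc n)) t'"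
      using P ab unfolding ispart_def t'_def
      by (auto simp: le_Suc_eq less_Suc_eq)
    then have "psum g (Suc (Suc n)) t' \<le> Lf g b" by (rule Lf_upper[OF r ab(3)])
    moreover have "psum g (Suc (Suc n)) t' = psum g n t + dist (g (t n)) (g a) + dist (g a) (g b)"
      unfolding psum_def t'_def by (simp add: sum.lessThan_Suc)
    ultimately show ?thesis using zero_le_dist[of "g (t n)" "g a"] by linarith
  qed
  then have "Lf g a \<le> Lf g b - dist (g a) (g b)" by (intro Lf_least ab(1)) 
  then show ?thesis by simp
qed

lemma Lf_mono:
  assumes r: "rectifiable_path g" and ab: "0 \<le> a" "a \<le> b" "b \<le> 1"
  shows "Lf g a \<le> Lf g b"
  using Lf_add[OF assms] zero_le_dist[of "g a" "g b"] by linarith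

lemma Lf_le:
  assumes r: "rectifiable_path g"
  obtains M where "\<And>s. 0 \<le> s \<Longrightarrow> s \<le> 1 \<Longrightarrow> Lf g s \<le> M"
proof -
  obtain M where "\<And>n t s. s \<le> 1 \<Longrightarrow> ispart 0 s n t \<Longrightarrow> psum g n t \<le> M"
    using rect_bound[OF r] by blast
  then show ?thesis using that Lf_least by metis
qed

lemma rect_reverse:
  assumes "rectifiable_path g"
  shows "rectifiable_path (\<lambda>t. g (1 - t))"
proof -
  obtain M where M: "\<And>n t s. s \<le> 1 \<Longrightarrow> ispart 0 s n t \<Longrightarrow> psum g n t \<le> M"
    using rect_bound[OF assms] by blast
  show ?thesis unfolding rectifiable_path_def
  proof (intro exI[of _ M] allI impI)
    fix n and t :: "nat \<Rightarrow> real"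
    assume P: "(\<forall>i\<le>n. t i \<in> {0..1}) \<and> (\<forall>i<n. t i \<le> t (Suc i))"
    define u where "u = (\<lambda>i. 1 - t (n - i))"
    have "ispart 0 1 n u" unfolding ispart_def u_def
    proof (intro conjI allI impI)
      fix i assume "i \<le> n" then show "1 - t (n - i) \<in> {0..1}" using P by auto
    next
      fix i assume "i < n"
      then have "n - i = Suc (n - Suc i)" by simp
      then show "1 - t (n - i) \<le> 1 - t (n - Suc i)" proof -
        have "t (n - Suc i) \<le> t (Suc (n - Suc i))" using P \<open>i < n\<close> by simp
        then show ?thesis using \<open>n - i = Suc (n - Suc i)\<close> by simp
      qed
    qed
    then have "psum g n u \<le> M" using M by blast
    moreover have "psum g n u = (\<Sum>i<n. dist (g (1 - t i)) (g (1 - t (Suc i))))"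
    proof -
      have "psum g n u = (\<Sum>i<n. dist (g (u (n - Suc i))) (g (u (Suc (n - Suc i)))))"
        unfolding psum_def by (rule sum.nat_diff_reindex[symmetric])
      also have "\<dots> = (\<Sum>i<n. dist (g (1 - t (Suc i))) (g (1 - t i)))"
        by (intro sum.cong refl) (simp add: u_def Suc_diff_Suc)
      finally show ?thesis by (simp add: dist_commute)
    qed
    ultimately show "(\<Sum>i<n. dist (g (1 - t i)) (g (1 - t (Suc i)))) \<le> M" by simp
  qed
qed



lemma key_ineq:
  fixes f :: "'a::metric_space \<Rightarrow> 'b::metric_space" and p :: "real \<Rightarrow> 'a"
  assumes r: "rectifiable_path g" and ab: "0 \<le> a" "a \<le> b" "b \<le> 1" and c: "c > 0"
    and p: "continuous_on {a..b} p" and lift: "\<And>t. t \<in> {a..b} \<Longrightarrow> f (p t) = g t"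
    and loc: "\<And>t. t \<in> {a..b} \<Longrightarrow> \<exists>e>0. \<forall>z. dist z (p t) < e \<longrightarrow> c * dist z (p t) \<le> dist (f z) (f (p t))"
  shows "c * dist (p a) (p b) \<le> Lf g b - Lf g a"
proof (rule real_induct[OF ab(2), where P="\<lambda>u. c * dist (p a) (p u) \<le> Lf g u - Lf g a"])
  show "c * dist (p a) (p a) \<le> Lf g a - Lf g a" by simp
next
  fix s assume s: "a < s" "s \<le> b" and IH: "\<And>u. a \<le> u \<Longrightarrow> u < s \<Longrightarrow> c * dist (p a) (p u) \<le> Lf g u - Lf g a"
  have "(\<lambda>u. c * dist (p a) (p u)) s \<le> Lf g s - Lf g a"
  proof (rule continuous_le_on_closure[where S="{a..<s}" and f="\<lambda>u. c * dist (p a) (p u)" and x=s and a="Lf g s - Lf g a"])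
    show "continuous_on (closure {a..<s}) (\<lambda>u. c * dist (p a) (p u))"
      using s by (auto intro!: continuous_intros continuous_on_subset[OF p])
    show "s \<in> closure {a..<s}" using s by simp
    fix u assume u: "u \<in> {a..<s}"
    have "Lf g u \<le> Lf g s" using u s ab by (intro Lf_mono[OF r]) auto
    then show "c * dist (p a) (p u) \<le> Lf g s - Lf g a" using IH[of u] u by auto
  qed
  then show "c * dist (p a) (p s) \<le> Lf g s - Lf g a" by simp
next
  fix s assume s: "a \<le> s" "s < b" and IH: "\<And>u. a \<le> u \<Longrightarrow> u \<le> s \<Longrightarrow> c * dist (p a) (p u) \<le> Lf g u - Lf g a"
  obtain e where e: "e > 0" "\<And>z. dist z (p s) < e \<Longrightarrow> c * dist z (p s) \<le> dist (f z) (f (p s))"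
    using loc[of s] s by auto
  obtain d where d: "d > 0" "\<And>u. u \<in> {a..b} \<Longrightarrow> dist u s < d \<Longrightarrow> dist (p u) (p s) < e"
    using p[unfolded continuous_on_iff] s e(1) by (metis atLeastAtMost_iff less_imp_le)
  show "\<exists>d>0. \<forall>u. s < u \<and> u < s + d \<longrightarrow> c * dist (p a) (p u) \<le> Lf g u - Lf g a"
  proof (intro exI[of _ "min d (b - s)"] conjI allI impI)
    show "min d (b - s) > 0" using d s by simp
    fix u assume u: "s < u \<and> u < s + min d (b - s)"
    then have uab: "u \<in> {a..b}" and sab: "s \<in> {a..b}" using s by auto
    have "dist u s < d" using u by (auto simp: dist_real_def)
    then have "c * dist (p u) (p s) \<le> dist (f (p u)) (f (p s))" using d(2)[OF uab] e(2) by blast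
    also have "\<dots> = dist (g u) (g s)" using lift uab sab by simp
    finally have 1: "c * dist (p s) (p u) \<le> dist (g s) (g u)" by (simp add: dist_commute)
    have 2: "Lf g s + dist (g s) (g u) \<le> Lf g u" using ab s u by (intro Lf_add[OF r]) auto
    have 3: "c * dist (p a) (p s) \<le> Lf g s - Lf g a" using IH s by simp
    have "c * dist (p a) (p u) \<le> c * dist (p a) (p s) + c * dist (p s) (p u)"
      using c dist_triangle[of "p a" "p u" "p s"] by (simp add: distrib_left[symmetric])
    then show "c * dist (p a) (p u) \<le> Lf g u - Lf g a" using 1 2 3 by linarith
  qed
qed



definition LP :: "('a \<Rightarrow> 'b) \<Rightarrow> (real \<Rightarrow> 'b) \<Rightarrow> 'a \<Rightarrow> real \<Rightarrow> (real \<Rightarrow> 'a::topological_space) \<Rightarrow> bool" where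
  "LP f g x s p \<longleftrightarrow> continuous_on {0..s} p \<and> p 0 = x \<and> (\<forall>t\<in>{0..s}. f (p t) = g t)"

lemma LP_restrict: "LP f g x u p \<Longrightarrow> 0 \<le> t \<Longrightarrow> t \<le> u \<Longrightarrow> LP f g x t p"
  unfolding LP_def by (auto intro: continuous_on_subset)

lemma LP_uniq:
  fixes f :: "'a::metric_space \<Rightarrow> 'b::metric_space"
  assumes "local_homeo f" "LP f g x s p" "LP f g x s q" "t \<in> {0..s}"
  shows "p t = q t"
proof -
  have "0 \<le> s" using assms(4) by simp
  then show ?thesis
    using assms unfolding LP_def by (intro lift_unique[of f "{0..s}" p q 0 t]) auto
qed

lemma lift_path:
  fixes f :: "'a::complete_space \<Rightarrow> 'b::metric_space" and g :: "real \<Rightarrow> 'b"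
  assumes lh: "local_homeo f"
    and deriv: "\<And>B::'a set. bounded B \<Longrightarrow> (INF x\<in>B. lower_deriv f x) > 0"
    and proper: "\<exists>y0 x0. \<forall>M. \<exists>R. \<forall>x. dist x x0 > R \<longrightarrow> dist (f x) y0 > M"
    and r: "rectifiable_path g" and gc: "continuous_on {0..1} g" and x: "f x = g 0"
  shows "\<exists>p. LP f g x 1 p"
proof -
  obtain y0 x0 where pr: "\<And>M. \<exists>R. \<forall>x. dist x x0 > R \<longrightarrow> dist (f x) y0 > M" using proper by blast
  have "compact (g ` {0..1})" using gc compact_continuous_image compact_Icc by blast
  then have "bounded (g ` {0..1})" by (rule compact_imp_bounded)
  then obtain M where M: "\<And>t. t \<in> {0..1} \<Longrightarrow> dist y0 (g t) \<le> M"
    unfolding bounded_any_center[where a=y0] by blast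
  obtain R where R: "\<And>z. dist z x0 > R \<Longrightarrow> dist (f z) y0 > M" using pr by blast
  define B where "B = cball x0 R"
  have inB: "z \<in> B" if "t \<in> {0..1}" "f z = g t" for z t
  proof (rule ccontr)
    assume "z \<notin> B"
    then have "dist z x0 > R" by (simp add: B_def dist_commute)
    then have "dist (f z) y0 > M" by (rule R)
    then show False using M[OF that(1)] that(2) by (simp add: dist_commute)
  qed
  have "(INF x\<in>B. lower_deriv f x) > 0" using deriv by (simp add: B_def)
  then obtain c where c: "0 < ereal c" "ereal c < (INF x\<in>B. lower_deriv f x)"
    using ereal_dense2 by blast
  then have c0: "c > 0" by simp
  have loc: "\<exists>e>0. \<forall>w. dist w z < e \<longrightarrow> c * dist w z \<le> dist (f w) (f z)" if "z \<in> B" for z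
    using colip less_INF_D[OF c(2) that] by blast
  obtain LM where LM: "\<And>s. 0 \<le> s \<Longrightarrow> s \<le> 1 \<Longrightarrow> Lf g s \<le> LM" using Lf_le[OF r] by blast
  have fc: "continuous_on UNIV f" by (rule lh_cont[OF lh])
  show "\<exists>p. LP f g x 1 p"
  proof (rule real_induct[where a=0 and b=1 and P="\<lambda>s. \<exists>p. LP f g x s p"])
    show "(0::real) \<le> 1" by simp
    show "\<exists>p. LP f g x 0 p"
      by (rule exI[of _ "\<lambda>_. x"]) (auto simp: LP_def x)
  next
    fix s :: real assume s: "0 < s" "s \<le> 1" and IH: "\<And>u. 0 \<le> u \<Longrightarrow> u < s \<Longrightarrow> \<exists>p. LP f g x u p"
    define P where "P u = (SOME p. LP f g x u p)" for u
    have P: "LP f g x u (P u)" if "0 \<le> u" "u < s" for u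
      using IH[OF that] someI_ex unfolding P_def by metis
    define q where "q t = P t t" for t
    have qP: "q t = P u t" if "0 \<le> u" "u < s" "0 \<le> t" "t \<le> u" for u t
    proof -
      have "LP f g x t (P u)" using LP_restrict[OF P[OF that(1,2)] that(3,4)] .
      moreover have "LP f g x t (P t)" using P that by simp
      ultimately show ?thesis unfolding q_def using LP_uniq[OF lh] that by (metis atLeastAtMost_iff order_refl)
    qed
    have qlift: "f (q t) = g t" if "0 \<le> t" "t < s" for t
      using P[OF that] that unfolding q_def LP_def by auto
    have qB: "q t \<in> B" if "0 \<le> t" "t < s" for t
      using inB[OF _ qlift[OF that]] that s by auto
    have qcont: "continuous_on {0..u} q" if "0 \<le> u" "u < s" for u
    proof -
      have "continuous_on {0..u} (P u)" using P[OF that] by (simp add: LP_def)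
      then show ?thesis by (rule continuous_on_eq) (use qP that in auto)
    qed
    have qineq: "c * dist (q a) (q b) \<le> Lf g b - Lf g a" if "0 \<le> a" "a \<le> b" "b < s" for a b
    proof (rule key_ineq[OF r that(1,2) _ c0])
      show "b \<le> 1" using that s by simp
      show "continuous_on {a..b} q" using qcont[of b] that by (auto intro: continuous_on_subset)
      show "f (q t) = g t" if "t \<in> {a..b}" for t using qlift that \<open>0 \<le> a\<close> \<open>b < s\<close> by auto
      show "\<exists>e>0. \<forall>z. dist z (q t) < e \<longrightarrow> c * dist z (q t) \<le> dist (f z) (f (q t))" if "t \<in> {a..b}" for t
        using loc qB that \<open>0 \<le> a\<close> \<open>b < s\<close> by auto
    qed
    define \<Lambda> where "\<Lambda> = Sup (Lf g ` {0..<s})"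
    have bddL: "bdd_above (Lf g ` {0..<s})" using LM s by (intro bdd_aboveI[of _ LM]) auto
    have neL: "Lf g ` {0..<s} \<noteq> {}" using s by auto
    have LL: "Lf g t \<le> \<Lambda>" if "0 \<le> t" "t < s" for t
      unfolding \<Lambda>_def using that by (intro cSup_upper bddL) auto
    have cau: "\<exists>t0. 0 \<le> t0 \<and> t0 < s \<and> (\<forall>t t'. t0 \<le> t \<longrightarrow> t0 \<le> t' \<longrightarrow> t < s \<longrightarrow> t' < s \<longrightarrow> dist (q t) (q t') < e)"
      if e: "e > 0" for e
    proof -
      have "\<Lambda> - c * e < \<Lambda>" using c0 e by simp
      then obtain t0 where t0: "0 \<le> t0" "t0 < s" "\<Lambda> - c * e < Lf g t0"
        unfolding \<Lambda>_def using less_cSup_iff[OF neL bddL] by auto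
      have one: "dist (q t) (q t') < e" if "t0 \<le> t" "t \<le> t'" "t' < s" for t t'
      proof -
        have "c * dist (q t) (q t') \<le> Lf g t' - Lf g t" using qineq that t0 by simp
        also have "\<dots> \<le> \<Lambda> - Lf g t0" using LL[of t'] Lf_mono[OF r, of t0 t] that t0 s by auto
        also have "\<dots> < c * e" using t0 by simp
        finally show ?thesis using c0 by simp
      qed
      show ?thesis
      proof (intro exI[of _ t0] conjI allI impI t0(1,2))
        fix t t' assume "t0 \<le> t" "t0 \<le> t'" "t < s" "t' < s"
        then show "dist (q t) (q t') < e"
          using one[of t t'] one[of t' t] by (cases "t \<le> t'") (auto simp: dist_commute)
      qed
    qed
    define \<sigma> where "\<sigma> n = s - s * inverse (real (Suc n))" for n
    have \<sigma>: "0 \<le> \<sigma> n" "\<sigma> n < s" for n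
    proof -
      have "inverse (real (Suc n)) \<le> 1" "inverse (real (Suc n)) > 0" by (auto simp: inverse_le_1_iff)
      then show "0 \<le> \<sigma> n" "\<sigma> n < s" unfolding \<sigma>_def using s
        by (auto simp: mult_le_cancel_left1)
    qed
    have \<sigma>lim: "\<sigma> \<longlonglongrightarrow> s"
    proof -
      have "(\<lambda>n. s - s * inverse (real (Suc n))) \<longlonglongrightarrow> s - s * 0"
        by (intro tendsto_intros LIMSEQ_inverse_real_of_nat)
      then show ?thesis by (simp add: \<sigma>_def[abs_def])
    qed
    have evs: "eventually (\<lambda>n. t0 \<le> \<sigma> n) sequentially" if "t0 < s" for t0
      using order_tendstoD(1)[OF \<sigma>lim that] by (auto elim: eventually_mono)
    have "Cauchy (\<lambda>n. q (\<sigma> n))"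
    proof (rule metric_CauchyI)
      fix e :: real assume "e > 0"
      then obtain t0 where t0: "0 \<le> t0" "t0 < s" "\<And>t t'. t0 \<le> t \<Longrightarrow> t0 \<le> t' \<Longrightarrow> t < s \<Longrightarrow> t' < s \<Longrightarrow> dist (q t) (q t') < e"
        using cau by blast
      obtain N where N: "\<And>n. n \<ge> N \<Longrightarrow> t0 \<le> \<sigma> n" using evs[OF t0(2)] unfolding eventually_sequentially by blast
      show "\<exists>M. \<forall>m\<ge>M. \<forall>n\<ge>M. dist (q (\<sigma> m)) (q (\<sigma> n)) < e"
        using N t0(3) \<sigma>(2) by blast
    qed
    then obtain xs where xs: "(\<lambda>n. q (\<sigma> n)) \<longlonglongrightarrow> xs"
      using Cauchy_convergent_iff convergent_def by blast
    have near: "\<exists>t0. 0 \<le> t0 \<and> t0 < s \<and> (\<forall>t. t0 \<le> t \<longrightarrow> t < s \<longrightarrow> dist (q t) xs \<le> e)" if ep: "e > 0" for e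
    proof -
      obtain t0 where t0: "0 \<le> t0" "t0 < s" "\<And>t t'. t0 \<le> t \<Longrightarrow> t0 \<le> t' \<Longrightarrow> t < s \<Longrightarrow> t' < s \<Longrightarrow> dist (q t) (q t') < e"
        using cau[OF ep] by blast
      show ?thesis
      proof (intro exI[of _ t0] conjI allI impI t0(1,2))
        fix t assume t: "t0 \<le> t" "t < s"
        have "(\<lambda>n. dist (q t) (q (\<sigma> n))) \<longlonglongrightarrow> dist (q t) xs"
          by (intro tendsto_intros xs)
        moreover have "eventually (\<lambda>n. dist (q t) (q (\<sigma> n)) \<le> e) sequentially"
          using evs[OF t0(2)] by (rule eventually_mono) (use t0(3)[of t] t \<sigma>(2) in \<open>auto intro: less_imp_le\<close>)
        ultimately show "dist (q t) xs \<le> e" by (rule tendsto_upperbound) simp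
      qed
    qed
    have fxs: "f xs = g s"
    proof (rule LIMSEQ_unique)
      show "(\<lambda>n. f (q (\<sigma> n))) \<longlonglongrightarrow> f xs"
        using continuous_on_tendsto_compose[OF fc xs] by simp
      have "\<forall>\<^sub>F n in sequentially. \<sigma> n \<in> {0..1}"
        using s \<sigma> by (intro always_eventually allI) (metis atLeastAtMost_iff less_imp_le order.strict_trans2)
      then have "(\<lambda>n. g (\<sigma> n)) \<longlonglongrightarrow> g s"
        using continuous_on_tendsto_compose[OF gc \<sigma>lim] s by auto
      then show "(\<lambda>n. f (q (\<sigma> n))) \<longlonglongrightarrow> g s"
        using qlift \<sigma> by simp
    qed
    define q' where "q' t = (if t < s then q t else xs)" for t
    have "LP f g x s q'"
      unfolding LP_def
    proof (intro conjI ballI)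
      show "q' 0 = x" using P[of 0] s unfolding q'_def q_def LP_def by auto
      fix t assume "t \<in> {0..s}"
      then show "f (q' t) = g t" using qlift fxs by (auto simp: q'_def)
    next
      show "continuous_on {0..s} q'"
        unfolding continuous_on_iff
      proof (intro ballI allI impI)
        fix t e assume t: "t \<in> {0..s}" and e: "(e::real) > 0"
        show "\<exists>d>0. \<forall>t'\<in>{0..s}. dist t' t < d \<longrightarrow> dist (q' t') (q' t) < e"
        proof (cases "t < s")
          case True
          define u where "u = (t + s) / 2"
          have u: "0 \<le> u" "u < s" "t < u" using t True by (auto simp: u_def)
          have "continuous_on {0..u} q" by (rule qcont[OF u(1,2)])
          then obtain d1 where d1: "d1 > 0" "\<And>t'. t' \<in> {0..u} \<Longrightarrow> dist t' t < d1 \<Longrightarrow> dist (q t') (q t) < e"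
            unfolding continuous_on_iff using t u e by (metis atLeastAtMost_iff less_imp_le)
          show ?thesis
          proof (intro exI[of _ "min d1 (u - t)"] conjI ballI impI)
            show "min d1 (u - t) > 0" using d1 u by simp
            fix t' assume t': "t' \<in> {0..s}" "dist t' t < min d1 (u - t)"
            then have "t' < u" by (auto simp: dist_real_def)
            then show "dist (q' t') (q' t) < e" using d1(2)[of t'] t' True u by (auto simp: q'_def)
          qed
        next
          case False
          then have ts: "t = s" using t by simp
          obtain t0 where t0: "0 \<le> t0" "t0 < s" "\<And>t. t0 \<le> t \<Longrightarrow> t < s \<Longrightarrow> dist (q t) xs \<le> e / 2"
            using near[of "e/2"] e by auto
          show ?thesis
          proof (intro exI[of _ "s - t0"] conjI ballI impI)
            show "s - t0 > 0" using t0 by simp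
            fix t' assume t': "t' \<in> {0..s}" "dist t' t < s - t0"
            then have "t0 \<le> t'" using ts by (auto simp: dist_real_def)
            then show "dist (q' t') (q' t) < e" using t0(3)[of t'] ts e by (auto simp: q'_def)
          qed
        qed
      qed
    qed
    then show "\<exists>p. LP f g x s p" by blast
  next
    fix s :: real assume s: "0 \<le> s" "s < 1" and IH: "\<And>u. 0 \<le> u \<Longrightarrow> u \<le> s \<Longrightarrow> \<exists>p. LP f g x u p"
    obtain p where p: "LP f g x s p" using IH s by auto
    obtain V \<phi> where V: "open V" "p s \<in> V" "open (f ` V)" "homeomorphism V (f ` V) f \<phi>"
      using lh_nbhd[OF lh] by blast
    have gs: "g s \<in> f ` V" using p V(2) s unfolding LP_def by force
    obtain e where e: "e > 0" "ball (g s) e \<subseteq> f ` V" using V(3) gs openE by blast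
    obtain d where d: "d > 0" "\<And>u. u \<in> {0..1} \<Longrightarrow> dist u s < d \<Longrightarrow> dist (g u) (g s) < e"
      using gc[unfolded continuous_on_iff] s e(1) by (metis atLeastAtMost_iff less_imp_le)
    have gV: "g u \<in> f ` V" if "u \<in> {0..1}" "dist u s < d" for u
      using d(2)[OF that] e(2) by (auto simp: dist_commute)
    have \<phi>c: "continuous_on (f ` V) \<phi>" and \<phi>f: "\<And>v. v \<in> V \<Longrightarrow> \<phi> (f v) = v"
      and f\<phi>: "\<And>w. w \<in> f ` V \<Longrightarrow> f (\<phi> w) = w"
      using V(4) unfolding homeomorphism_def by auto
    show "\<exists>d>0. \<forall>u. s < u \<and> u < s + d \<longrightarrow> (\<exists>p. LP f g x u p)"
    proof (intro exI[of _ "min d (1 - s)"] conjI allI impI)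
      show "min d (1 - s) > 0" using d s by simp
      fix u assume u: "s < u \<and> u < s + min d (1 - s)"
      have gV': "g t \<in> f ` V" if "t \<in> {s..u}" for t
        using gV[of t] that u s by (auto simp: dist_real_def)
      define p' where "p' t = (if t \<le> s then p t else \<phi> (g t))" for t
      have "LP f g x u p'"
        unfolding LP_def
      proof (intro conjI ballI)
        show "p' 0 = x" using p s by (simp add: p'_def LP_def)
        fix t assume t: "t \<in> {0..u}"
        show "f (p' t) = g t"
        proof (cases "t \<le> s")
          case True then show ?thesis using p t by (auto simp: p'_def LP_def)
        next
          case False then show ?thesis using f\<phi> gV'[of t] t by (auto simp: p'_def)
        qed
      next
        have e1: "{t \<in> {0..u}. t \<le> s} = {0..s}" using u s by auto
        have e2: "{t \<in> {0..u}. s \<le> t} = {s..u}" using u s by auto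
        have c1: "continuous_on {0..s} p" using p by (simp add: LP_def)
        have c2: "continuous_on {s..u} (\<lambda>t. \<phi> (g t))"
        proof (rule continuous_on_compose2[OF \<phi>c])
          show "continuous_on {s..u} g" using u s by (intro continuous_on_subset[OF gc]) auto
          show "g ` {s..u} \<subseteq> f ` V" using gV' by auto
        qed
        have "continuous_on {0..u} (\<lambda>t. if t \<le> s then p t else \<phi> (g t))"
        proof (rule continuous_on_cases_le)
          show "continuous_on {t \<in> {0..u}. t \<le> s} p" using c1 e1 by simp
          show "continuous_on {t \<in> {0..u}. s \<le> t} (\<lambda>t. \<phi> (g t))" using c2 e2 by simp
          show "continuous_on {0..u} (\<lambda>t. t)" by (rule continuous_on_id)
          fix t assume "t \<in> {0..u}" "t = s"
          then have "t = s" by simp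
          moreover have "g s = f (p s)" using p s unfolding LP_def by auto
          ultimately show "p t = \<phi> (g t)" using \<phi>f[OF V(2)] by simp
        qed
        then show "continuous_on {0..u} p'" by (simp add: p'_def)
      qed
      then show "\<exists>p. LP f g x u p" by blast
    qed
  qed
qed



definition liftp :: "('a \<Rightarrow> 'b) \<Rightarrow> (real \<Rightarrow> 'b) \<Rightarrow> 'a \<Rightarrow> real \<Rightarrow> 'a::topological_space" where
  "liftp f g x = (SOME p. LP f g x 1 p)"

context
  fixes f :: "'a::complete_space \<Rightarrow> 'b::metric_space"
  assumes lh: "local_homeo f"
    and deriv: "\<And>B::'a set. bounded B \<Longrightarrow> (INF x\<in>B. lower_deriv f x) > 0"
    and proper: "\<exists>y0 x0. \<forall>M. \<exists>R. \<forall>x. dist x x0 > R \<longrightarrow> dist (f x) y0 > M"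
begin

lemma liftp_LP:
  assumes "rectifiable_path g" "continuous_on {0..1} g" "f x = g 0"
  shows "LP f g x 1 (liftp f g x)"
  using lift_path[OF lh deriv proper assms] someI_ex unfolding liftp_def by metis

lemma liftp_eq:
  assumes "rectifiable_path g" "continuous_on {0..1} g" "f x = g 0" "LP f g x 1 p" "t \<in> {0..1}"
  shows "liftp f g x t = p t"
  using LP_uniq[OF lh liftp_LP[OF assms(1-3)] assms(4,5)] .

lemma param_cont:
  fixes U :: "'c::metric_space set" and H :: "'c \<times> real \<Rightarrow> 'b"
  assumes U: "open U" and Hc: "continuous_on (U \<times> {0..1}) H"
    and H0: "\<And>z. z \<in> U \<Longrightarrow> H (z, 0) = y"
    and Hr: "\<And>z. z \<in> U \<Longrightarrow> rectifiable_path (\<lambda>t. H (z, t))"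
    and fx: "f x = y"
  shows "continuous_on U (\<lambda>z. liftp f (\<lambda>t. H (z, t)) x 1)"
proof -
  define G where "G z = liftp f (\<lambda>t. H (z, t)) x" for z
  have Hpc: "continuous_on {0..1} (\<lambda>t. H (z, t))" if "z \<in> U" for z
    by (rule continuous_on_compose2[OF Hc]) (use that in \<open>auto intro!: continuous_intros\<close>)
  have Hzc: "continuous_on U (\<lambda>z. H (z, t))" if "t \<in> {0..1}" for t
    by (rule continuous_on_compose2[OF Hc]) (use that in \<open>auto intro!: continuous_intros\<close>)
  have GLP: "LP f (\<lambda>t. H (z, t)) x 1 (G z)" if "z \<in> U" for z
    unfolding G_def by (rule liftp_LP[OF Hr[OF that] Hpc[OF that]]) (simp add: fx H0 that)
  have Gc: "continuous_on {0..1} (G z)" and G0: "G z 0 = x" and Gl: "\<And>t. t \<in> {0..1} \<Longrightarrow> f (G z t) = H (z, t)"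
    if "z \<in> U" for z using GLP[OF that] unfolding LP_def by auto
  have "\<forall>e>0. \<exists>d>0. \<forall>z\<in>U. dist z z0 < d \<longrightarrow> dist (G z 1) (G z0 1) < e" if z0: "z0 \<in> U" for z0
  proof -
    define P where "P s \<longleftrightarrow> (\<forall>e>0. \<exists>d>0. \<forall>z\<in>U. dist z z0 < d \<longrightarrow> dist (G z s) (G z0 s) < e)" for s
    have loclem: "\<exists>\<delta>>0. \<forall>s0 s1. s0 \<in> {0..1} \<longrightarrow> s1 \<in> {0..1} \<longrightarrow> s0 \<le> s1 \<longrightarrow> \<bar>s0 - s\<bar> < \<delta> \<longrightarrow> \<bar>s1 - s\<bar> < \<delta>
        \<longrightarrow> P s0 \<longrightarrow> (\<forall>s'\<in>{s0..s1}. P s')" if s: "s \<in> {0..1}" for s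
    proof -
      obtain V \<phi> where V: "open V" "G z0 s \<in> V" "open (f ` V)" "homeomorphism V (f ` V) f \<phi>"
        using lh_nbhd[OF lh] by blast
      have \<phi>c: "continuous_on (f ` V) \<phi>" and \<phi>f: "\<And>v. v \<in> V \<Longrightarrow> \<phi> (f v) = v"
        and f\<phi>: "\<And>w. w \<in> f ` V \<Longrightarrow> f (\<phi> w) = w"
        using V(4) unfolding homeomorphism_def by auto
      obtain e0 where e0: "e0 > 0" "ball (G z0 s) e0 \<subseteq> V" using V(1,2) openE by blast
      obtain \<delta> where \<delta>: "\<delta> > 0" "\<And>s'. s' \<in> {0..1} \<Longrightarrow> dist s' s < \<delta> \<Longrightarrow> dist (G z0 s') (G z0 s) < e0"
        using Gc[OF z0, unfolded continuous_on_iff] s e0(1) by metis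
      have G0V: "G z0 s' \<in> V" if "s' \<in> {0..1}" "\<bar>s' - s\<bar> < \<delta>" for s'
        using \<delta>(2)[OF that(1)] that(2) e0(2) by (auto simp: dist_real_def dist_commute)
      show ?thesis
      proof (intro exI[of _ \<delta>] conjI allI impI ballI \<delta>(1))
        fix s0 s1 s' assume s0: "s0 \<in> {0..1}" and s1: "s1 \<in> {0..1}" and s01: "s0 \<le> s1"
          and d0: "\<bar>s0 - s\<bar> < \<delta>" and d1: "\<bar>s1 - s\<bar> < \<delta>" and Ps0: "P s0" and s': "s' \<in> {s0..s1}"
        define K where "K = {s0..s1}"
        have K01: "K \<subseteq> {0..1}" using s0 s1 by (auto simp: K_def)
        have KV: "G z0 t \<in> V" if "t \<in> K" for t
          using G0V[of t] that K01 d0 d1 by (auto simp: K_def)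
        have "openin (top_of_set (U \<times> {0..1})) ((U \<times> {0..1}) \<inter> H -` (f ` V))"
          by (rule continuous_openin_preimage_gen[OF Hc V(3)])
        then obtain T where T: "open T" "(U \<times> {0..1}) \<inter> H -` (f ` V) = (U \<times> {0..1}) \<inter> T"
          unfolding openin_open by blast
        have "{z0} \<times> K \<subseteq> T"
        proof
          fix w assume "w \<in> {z0} \<times> K"
          then obtain t where w: "w = (z0, t)" "t \<in> K" by auto
          have "H (z0, t) = f (G z0 t)" using Gl[OF z0] w K01 by auto
          then have "H (z0, t) \<in> f ` V" using KV[OF w(2)] by simp
          then have "w \<in> (U \<times> {0..1}) \<inter> H -` (f ` V)" using w z0 K01 by auto
          then show "w \<in> T" using T(2) by blast
        qed
        then obtain X0 where X0: "z0 \<in> X0" "open X0" "X0 \<times> K \<subseteq> T"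
          using Elementary_Topology.tube_lemma[OF _ T(1)] unfolding K_def by (metis compact_Icc)
        have HV: "H (z, t) \<in> f ` V" if "z \<in> U" "z \<in> X0" "t \<in> K" for z t
        proof -
          have "(z, t) \<in> (U \<times> {0..1}) \<inter> T" using that X0(3) K01 by auto
          then show ?thesis using T(2) by blast
        qed
        obtain r where r: "r > 0" "ball z0 r \<subseteq> X0" using X0(1,2) openE by blast
        have "G z0 s0 \<in> V" using KV s01 by (simp add: K_def)
        then obtain e1 where e1: "e1 > 0" "ball (G z0 s0) e1 \<subseteq> V" using V(1) openE by blast
        obtain d1 where d1: "d1 > 0" "\<And>z. z \<in> U \<Longrightarrow> dist z z0 < d1 \<Longrightarrow> dist (G z s0) (G z0 s0) < e1"
          using Ps0 e1(1) unfolding P_def by blast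
        have Geq: "G z t = \<phi> (H (z, t))" if z: "z \<in> U" "dist z z0 < min d1 r" and t: "t \<in> K" for z t
        proof (rule lift_unique[OF lh, of K "G z" "\<lambda>t. \<phi> (H (z, t))" s0 t])
          have zX: "z \<in> X0" using z r by (auto simp: dist_commute)
          show "connected K" by (simp add: K_def)
          show "continuous_on K (G z)" using Gc[OF z(1)] K01 by (rule continuous_on_subset)
          show "continuous_on K (\<lambda>t. \<phi> (H (z, t)))"
          proof (rule continuous_on_compose2[OF \<phi>c])
            show "continuous_on K (\<lambda>t. H (z, t))" using Hpc[OF z(1)] K01 by (rule continuous_on_subset)
            show "(\<lambda>t. H (z, t)) ` K \<subseteq> f ` V" using HV[OF z(1) zX] by auto
          qed
          show "f (G z t') = f (\<phi> (H (z, t')))" if "t' \<in> K" for t'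
            using Gl[OF z(1)] f\<phi>[OF HV[OF z(1) zX that]] that K01 by auto
          show "s0 \<in> K" using s01 by (simp add: K_def)
          have "G z s0 \<in> V" using d1(2)[OF z(1)] z(2) e1(2) by (auto simp: dist_commute)
          moreover have "H (z, s0) = f (G z s0)" using Gl[OF z(1)] s0 by simp
          ultimately show "G z s0 = \<phi> (H (z, s0))" using \<phi>f by simp
        qed (rule t)
        have s'K: "s' \<in> K" using s' by (simp add: K_def)
        have s'01: "s' \<in> {0..1}" using s'K K01 by auto
        have z0X: "z0 \<in> X0" by (rule X0(1))
        show "P s'" unfolding P_def
        proof (intro allI impI)
          fix e :: real assume e: "e > 0"
          have Hz0: "H (z0, s') \<in> f ` V" using HV[OF z0 z0X s'K] .
          obtain \<eta> where \<eta>: "\<eta> > 0" "\<And>w. w \<in> f ` V \<Longrightarrow> dist w (H (z0, s')) < \<eta> \<Longrightarrow> dist (\<phi> w) (\<phi> (H (z0, s'))) < e"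
            using \<phi>c[unfolded continuous_on_iff] Hz0 e by metis
          obtain d2 where d2: "d2 > 0" "\<And>z. z \<in> U \<Longrightarrow> dist z z0 < d2 \<Longrightarrow> dist (H (z, s')) (H (z0, s')) < \<eta>"
            using Hzc[OF s'01, unfolded continuous_on_iff] z0 \<eta>(1) by metis
          show "\<exists>d>0. \<forall>z\<in>U. dist z z0 < d \<longrightarrow> dist (G z s') (G z0 s') < e"
          proof (intro exI[of _ "min (min d1 r) d2"] conjI ballI impI)
            show "min (min d1 r) d2 > 0" using d1 r d2 by simp
            fix z assume z: "z \<in> U" "dist z z0 < min (min d1 r) d2"
            have zX: "z \<in> X0" using z r by (auto simp: dist_commute)
            have "G z s' = \<phi> (H (z, s'))" using Geq[OF z(1) _ s'K] z(2) by simp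
            moreover have "G z0 s' = \<phi> (H (z0, s'))" using Geq[OF z0 _ s'K] d1 r by simp
            ultimately show "dist (G z s') (G z0 s') < e"
              using \<eta>(2)[OF HV[OF z(1) zX s'K]] d2(2)[OF z(1)] z(2) by simp
          qed
        qed
      qed
    qed
    have "P 1"
    proof (rule real_induct[where a=0 and b=1 and P=P])
      show "(0::real) \<le> 1" by simp
      show "P 0" unfolding P_def using G0 z0 by (auto intro: exI[of _ 1])
    next
      fix s :: real assume s: "0 < s" "s \<le> 1" and IH: "\<And>u. 0 \<le> u \<Longrightarrow> u < s \<Longrightarrow> P u"
      obtain \<delta> where \<delta>: "\<delta> > 0" "\<And>s0 s1. s0 \<in> {0..1} \<Longrightarrow> s1 \<in> {0..1} \<Longrightarrow> s0 \<le> s1 \<Longrightarrow> \<bar>s0 - s\<bar> < \<delta> \<Longrightarrow> \<bar>s1 - s\<bar> < \<delta>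
        \<Longrightarrow> P s0 \<Longrightarrow> (\<forall>s'\<in>{s0..s1}. P s')"
        using loclem[of s] s by (meson atLeastAtMost_iff less_imp_le order_refl)
      define s0 where "s0 = max 0 (s - \<delta>/2)"
      have "s0 \<in> {0..1}" "s0 < s" "\<bar>s0 - s\<bar> < \<delta>" using s \<delta>(1) by (auto simp: s0_def)
      moreover have "P s0" using IH[of s0] \<open>s0 < s\<close> by (simp add: s0_def)
      ultimately show "P s" using \<delta>(2)[of s0 s] s \<delta>(1) by auto
    next
      fix s :: real assume s: "0 \<le> s" "s < 1" and IH: "\<And>u. 0 \<le> u \<Longrightarrow> u \<le> s \<Longrightarrow> P u"
      obtain \<delta> where \<delta>: "\<delta> > 0" "\<And>s0 s1. s0 \<in> {0..1} \<Longrightarrow> s1 \<in> {0..1} \<Longrightarrow> s0 \<le> s1 \<Longrightarrow> \<bar>s0 - s\<bar> < \<delta> \<Longrightarrow> \<bar>s1 - s\<bar> < \<delta>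
        \<Longrightarrow> P s0 \<Longrightarrow> (\<forall>s'\<in>{s0..s1}. P s')"
        using loclem[of s] s by (meson atLeastAtMost_iff less_imp_le order_refl)
      define s1 where "s1 = min 1 (s + \<delta>/2)"
      have s1: "s1 \<in> {0..1}" "s \<le> s1" "\<bar>s1 - s\<bar> < \<delta>" using s \<delta>(1) by (auto simp: s1_def)
      have all: "\<forall>s'\<in>{s..s1}. P s'" using \<delta>(2)[OF _ s1(1) s1(2) _ s1(3)] s \<delta>(1) IH[of s] by auto
      show "\<exists>d>0. \<forall>u. s < u \<and> u < s + d \<longrightarrow> P u"
      proof (intro exI[of _ "min (\<delta>/2) (1 - s)"] conjI allI impI)
        show "min (\<delta>/2) (1 - s) > 0" using \<delta>(1) s by simp
        fix u assume "s < u \<and> u < s + min (\<delta>/2) (1 - s)"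
        then have "u \<in> {s..s1}" by (auto simp: s1_def)
        then show "P u" using all by blast
      qed
    qed
    then show ?thesis unfolding P_def .
  qed
  then show ?thesis unfolding continuous_on_iff G_def by blast
qed

end



lemma LP_reverse:
  assumes "LP f g x 1 p"
  shows "LP f (\<lambda>t. g (1 - t)) (p 1) 1 (\<lambda>t. p (1 - t))"
  unfolding LP_def
proof (intro conjI ballI)
  have "continuous_on {0..1} p" using assms by (simp add: LP_def)
  then show "continuous_on {0..1} (\<lambda>t. p (1 - t))"
    by (rule continuous_on_compose2) (auto intro!: continuous_intros)
  show "p (1 - 0) = p 1" by simp
  fix t :: real assume "t \<in> {0..1}"
  then show "f (p (1 - t)) = g (1 - t)" using assms by (auto simp: LP_def)
qed


context
  fixes f :: "'a::complete_space \<Rightarrow> 'b::metric_space"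
  assumes lh: "local_homeo f"
    and deriv: "\<And>B::'a set. bounded B \<Longrightarrow> (INF x\<in>B. lower_deriv f x) > 0"
    and proper: "\<exists>y0 x0. \<forall>M. \<exists>R. \<forall>x. dist x x0 > R \<longrightarrow> dist (f x) y0 > M"
begin

lemma contr_path:
  fixes U :: "'b set"
  assumes UH: "continuous_on (U \<times> {0..1}) H" "\<forall>z\<in>U. H (z, 0) = y \<and> H (z, 1) = z \<and> rectifiable_path (\<lambda>t. H (z, t))"
    and z: "z \<in> U"
  shows "rectifiable_path (\<lambda>t. H (z, t))" "H (z, 0) = y" "H (z, 1) = z" "continuous_on {0..1} (\<lambda>t. H (z, t))"
    "rectifiable_path (\<lambda>t. H (z, 1 - t))" "continuous_on {0..1} (\<lambda>t. H (z, 1 - t))"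
proof -
  show gr: "rectifiable_path (\<lambda>t. H (z, t))" and "H (z, 0) = y" "H (z, 1) = z" using UH(2) z by auto
  show gc: "continuous_on {0..1} (\<lambda>t. H (z, t))"
    by (rule continuous_on_compose2[OF UH(1)]) (use z in \<open>auto intro!: continuous_intros\<close>)
  show "rectifiable_path (\<lambda>t. H (z, 1 - t))" using rect_reverse[OF gr] .
  show "continuous_on {0..1} (\<lambda>t. H (z, 1 - t))"
    by (rule continuous_on_compose2[OF gc, where f="\<lambda>t. 1 - t"]) (auto intro!: continuous_intros)
qed

lemma lift_LP:
  fixes U :: "'b set"
  assumes UH: "continuous_on (U \<times> {0..1}) H" "\<forall>z\<in>U. H (z, 0) = y \<and> H (z, 1) = z \<and> rectifiable_path (\<lambda>t. H (z, t))"
    and z: "z \<in> U" and a: "f a = y"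
  shows "LP f (\<lambda>t. H (z, t)) a 1 (liftp f (\<lambda>t. H (z, t)) a)"
  using contr_path[OF UH z] a by (intro liftp_LP[OF lh deriv proper]) auto

lemma lift_back:
  fixes U :: "'b set"
  assumes UH: "continuous_on (U \<times> {0..1}) H" "\<forall>z\<in>U. H (z, 0) = y \<and> H (z, 1) = z \<and> rectifiable_path (\<lambda>t. H (z, t))"
    and z: "z \<in> U" and x: "f x = z"
  shows "\<exists>a'. f a' = y \<and> liftp f (\<lambda>t. H (z, t)) a' 1 = x"
proof -
  let ?g = "\<lambda>t. H (z, t)"
  let ?r = "\<lambda>t. H (z, 1 - t)"
  note cp = contr_path[OF UH z]
  have R: "LP f ?r x 1 (liftp f ?r x)" using cp x by (intro liftp_LP[OF lh deriv proper]) auto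
  define a' where "a' = liftp f ?r x 1"
  have fa': "f a' = y" using R cp unfolding LP_def a'_def by auto
  have "LP f (\<lambda>t. ?r (1 - t)) a' 1 (\<lambda>t. liftp f ?r x (1 - t))"
    using LP_reverse[OF R] unfolding a'_def .
  then have "LP f ?g a' 1 (\<lambda>t. liftp f ?r x (1 - t))" by simp
  then have "liftp f ?g a' 1 = liftp f ?r x (1 - 1)"
    using liftp_eq[OF lh deriv proper cp(1) cp(4)] fa' cp(2) by simp
  also have "\<dots> = x" using R unfolding LP_def by simp
  finally show ?thesis using fa' by blast
qed

lemma lift_inj:
  fixes U :: "'b set"
  assumes UH: "continuous_on (U \<times> {0..1}) H" "\<forall>z\<in>U. H (z, 0) = y \<and> H (z, 1) = z \<and> rectifiable_path (\<lambda>t. H (z, t))"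
    and z: "z \<in> U" and a: "f a = y" and b: "f b = y"
    and eq: "liftp f (\<lambda>t. H (z, t)) a 1 = liftp f (\<lambda>t. H (z, t)) b 1"
  shows "a = b"
proof -
  let ?g = "\<lambda>t. H (z, t)"
  let ?r = "\<lambda>t. H (z, 1 - t)"
  have La: "LP f ?g a 1 (liftp f ?g a)" by (rule lift_LP[OF UH z a])
  have Lb: "LP f ?g b 1 (liftp f ?g b)" by (rule lift_LP[OF UH z b])
  have Ra: "LP f ?r (liftp f ?g a 1) 1 (\<lambda>t. liftp f ?g a (1 - t))" using LP_reverse[OF La] by simp
  have Rb: "LP f ?r (liftp f ?g a 1) 1 (\<lambda>t. liftp f ?g b (1 - t))" using LP_reverse[OF Lb] eq by simp
  have "liftp f ?g a (1 - 1) = liftp f ?g b (1 - 1)"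
    using LP_uniq[OF lh Ra Rb, of 1] by simp
  then show ?thesis using La Lb unfolding LP_def by simp
qed

end

theorem mainTheorem12:
  fixes f :: "'a::complete_space \<Rightarrow> 'b::metric_space"
  assumes no_isolated: "\<And>x::'a. x islimpt UNIV"
    and lh: "local_homeo f"
    and pc: "path_connected (UNIV :: 'b set)"
    and lrc: "locally_R_contractible (UNIV :: 'b set)"
    and deriv: "\<And>B::'a set. bounded B \<Longrightarrow> (INF x\<in>B. lower_deriv f x) > 0"
    and proper: "\<exists>y0 x0. \<forall>M. \<exists>R. \<forall>x. dist x x0 > R \<longrightarrow> dist (f x) y0 > M"
  shows "covering_space UNIV f UNIV"
proof -
  have fc: "continuous_on UNIV f" by (rule lh_cont[OF lh])
  have nbhd: "\<exists>U H. open U \<and> y \<in> U \<and> continuous_on (U \<times> {0..1}) H \<and>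
       (\<forall>z\<in>U. H (z, 0) = y \<and> H (z, 1) = z \<and> rectifiable_path (\<lambda>t. H (z, t)))" for y :: 'b
  proof -
    have "\<exists>U. openin (top_of_set UNIV) U \<and> y \<in> U \<and>
        (\<exists>H. continuous_on (U \<times> {0..1}) H \<and> H ` (U \<times> {0..1}) \<subseteq> U \<and>
             (\<forall>t\<in>{0..1}. H (y, t) = y) \<and>
             (\<forall>z\<in>U. H (z, 0) = y \<and> H (z, 1) = z \<and> rectifiable_path (\<lambda>t. H (z, t))))"
      by (rule bspec[OF lrc[unfolded locally_R_contractible_def]]) simp
    then obtain U H where "openin (top_of_set UNIV) U" "y \<in> U" "continuous_on (U \<times> {0..1}) H"
        "\<forall>z\<in>U. H (z, 0) = y \<and> H (z, 1) = z \<and> rectifiable_path (\<lambda>t. H (z, t))"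
      by (elim exE conjE)
    moreover have "open U" using \<open>openin (top_of_set UNIV) U\<close> unfolding openin_open by auto
    ultimately show ?thesis by blast
  qed
  have surj: "range f = UNIV"
  proof -
    have o1: "open (range f)"
    proof (subst open_subopen, intro ballI)
      fix y assume "y \<in> range f"
      then obtain x where x: "y = f x" by blast
      obtain V g where V: "open V" "x \<in> V" "open (f ` V)" "homeomorphism V (f ` V) f g"
        using lh_nbhd[OF lh] by blast
      show "\<exists>T. open T \<and> y \<in> T \<and> T \<subseteq> range f" using V x by blast
    qed
    have o2: "open (- range f)"
    proof (subst open_subopen, intro ballI)
      fix y assume y: "y \<in> - range f"
      obtain U H where UH: "open U" "y \<in> U" "continuous_on (U \<times> {0..1}) H"
        "\<forall>z\<in>U. H (z, 0) = y \<and> H (z, 1) = z \<and> rectifiable_path (\<lambda>t. H (z, t))"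
        using nbhd[of y] by blast
      have "U \<subseteq> - range f"
      proof
        fix z assume z: "z \<in> U"
        show "z \<in> - range f"
        proof
          assume "z \<in> range f"
          then obtain x where "f x = z" by blast
          then obtain a' where "f a' = y"
            using lift_back[OF lh deriv proper UH(3,4) z] by blast
          then show False using y by auto
        qed
      qed
      then show "\<exists>T. open T \<and> y \<in> T \<and> T \<subseteq> - range f" using UH(1,2) by blast
    qed
    have "connected (UNIV :: 'b set)" using pc by (rule path_connected_imp_connected)
    from connectedD[OF this o1 o2] have "range f \<inter> UNIV = {} \<or> - range f \<inter> UNIV = {}" by auto
    then show ?thesis by auto
  qed
  show ?thesis
  proof (rule covering_spaceI)
    show "continuous_on UNIV f" by (rule fc)
    show "f ` UNIV = UNIV" by (rule surj)
    fix y :: 'b assume "y \<in> UNIV"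
    obtain U H where UH: "open U" "y \<in> U" "continuous_on (U \<times> {0..1}) H"
      "\<forall>z\<in>U. H (z, 0) = y \<and> H (z, 1) = z \<and> rectifiable_path (\<lambda>t. H (z, t))"
      using nbhd[of y] by blast
    define \<sigma> where "\<sigma> a z = liftp f (\<lambda>t. H (z, t)) a 1" for a z
    have f\<sigma>: "f (\<sigma> a z) = z" if "f a = y" "z \<in> U" for a z
      using lift_LP[OF lh deriv proper UH(3,4) that(2,1)] UH(4) that(2) unfolding LP_def \<sigma>_def by auto
    have \<sigma>c: "continuous_on U (\<sigma> a)" if "f a = y" for a
      unfolding \<sigma>_def[abs_def]
      by (rule param_cont[OF lh deriv proper UH(1,3) _ _ that]) (use UH(4) in auto)
    have \<sigma>f: "\<sigma> a (f w) = w" if "f a = y" "w \<in> \<sigma> a ` U" for a w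
      using f\<sigma> that by auto
    have \<sigma>open: "open (\<sigma> a ` U)" if a: "f a = y" for a
    proof (subst open_subopen, intro ballI)
      fix w assume "w \<in> \<sigma> a ` U"
      then obtain z where z: "z \<in> U" "w = \<sigma> a z" by blast
      obtain V g where V: "open V" "w \<in> V" "open (f ` V)" "homeomorphism V (f ` V) f g"
        using lh_nbhd[OF lh] by blast
      have gf: "\<And>v. v \<in> V \<Longrightarrow> g (f v) = v" using V(4) unfolding homeomorphism_def by blast
      obtain e where e: "e > 0" "ball w e \<subseteq> V" using V(1,2) openE by blast
      obtain d where d: "d > 0" "\<And>z'. z' \<in> U \<Longrightarrow> dist z' z < d \<Longrightarrow> dist (\<sigma> a z') (\<sigma> a z) < e"
        using \<sigma>c[OF a, unfolded continuous_on_iff] z(1) e(1) by metis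
      obtain d' where d': "d' > 0" "ball z d' \<subseteq> U" using UH(1) z(1) openE by blast
      define N where "N = ball z (min d d')"
      define W where "W = f -` N \<inter> V"
      have "open W" unfolding W_def N_def
        using fc V(1) continuous_on_open_vimage[of UNIV f] by auto
      moreover have "w \<in> W" using z f\<sigma>[OF a z(1)] V(2) d d' by (simp add: W_def N_def)
      moreover have "W \<subseteq> \<sigma> a ` U"
      proof
        fix w' assume w': "w' \<in> W"
        define z' where "z' = f w'"
        have z'N: "z' \<in> N" using w' by (simp add: W_def z'_def)
        then have z'U: "z' \<in> U" using d' by (auto simp: N_def dist_commute)
        have "dist z' z < d" using z'N by (simp add: N_def dist_commute)
        then have "\<sigma> a z' \<in> V" using d(2)[OF z'U] e(2) z(2) by (auto simp: dist_commute)
        moreover have "f (\<sigma> a z') = f w'" using f\<sigma>[OF a z'U] by (simp add: z'_def)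
        ultimately have "\<sigma> a z' = w'" using gf w' unfolding W_def by (metis IntD2)
        then show "w' \<in> \<sigma> a ` U" using z'U by blast
      qed
      ultimately show "\<exists>T. open T \<and> w \<in> T \<and> T \<subseteq> \<sigma> a ` U" by blast
    qed
    show "\<exists>T. y \<in> T \<and> openin (top_of_set UNIV) T \<and>
             (\<exists>v. \<Union>v = UNIV \<inter> f -` T \<and> (\<forall>u\<in>v. openin (top_of_set UNIV) u) \<and>
                  pairwise disjnt v \<and> (\<forall>u\<in>v. \<exists>q. homeomorphism u T f q))"
    proof (intro exI conjI)
      show "y \<in> U" by (rule UH(2))
      show "openin (top_of_set UNIV) U" using UH(1) by simp
      let ?v = "(\<lambda>a. \<sigma> a ` U) ` {a. f a = y}"
      show "\<Union>?v = UNIV \<inter> f -` U"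
      proof
        show "\<Union>?v \<subseteq> UNIV \<inter> f -` U" using f\<sigma> by auto
        show "UNIV \<inter> f -` U \<subseteq> \<Union>?v"
        proof
          fix x assume "x \<in> UNIV \<inter> f -` U"
          then have xU: "f x \<in> U" by simp
          obtain a' where "f a' = y" "\<sigma> a' (f x) = x"
            using lift_back[OF lh deriv proper UH(3,4) xU] unfolding \<sigma>_def by blast
          then show "x \<in> \<Union>?v" using xU by force
        qed
      qed
      show "\<forall>u\<in>?v. openin (top_of_set UNIV) u" using \<sigma>open by auto
      show "pairwise disjnt ?v"
        unfolding pairwise_def disjnt_def
      proof (intro ballI impI)
        fix u1 u2 assume u1: "u1 \<in> ?v" and u2: "u2 \<in> ?v" and ne: "u1 \<noteq> u2"
        obtain a where a: "f a = y" "u1 = \<sigma> a ` U" using u1 by blast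
        obtain b where b: "f b = y" "u2 = \<sigma> b ` U" using u2 by blast
        show "u1 \<inter> u2 = {}"
        proof (rule ccontr)
          assume "u1 \<inter> u2 \<noteq> {}"
          then obtain z1 z2 where z: "z1 \<in> U" "z2 \<in> U" "\<sigma> a z1 = \<sigma> b z2" using a b by blast
          then have "z1 = z2" using f\<sigma>[OF a(1) z(1)] f\<sigma>[OF b(1) z(2)] by metis
          then have "a = b" using lift_inj[OF lh deriv proper UH(3,4) z(1) a(1) b(1)] z(3) unfolding \<sigma>_def by blast
          then show False using a b ne by simp
        qed
      qed
      show "\<forall>u\<in>?v. \<exists>q. homeomorphism u U f q"
      proof
        fix u assume "u \<in> ?v"
        then obtain a where a: "f a = y" "u = \<sigma> a ` U" by blast
        have "homeomorphism (\<sigma> a ` U) U f (\<sigma> a)"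
        proof (rule homeomorphismI)
          show "continuous_on (\<sigma> a ` U) f" using fc by (rule continuous_on_subset) simp
          show "continuous_on U (\<sigma> a)" by (rule \<sigma>c[OF a(1)])
          show "f ` \<sigma> a ` U \<subseteq> U" using f\<sigma>[OF a(1)] by auto
          show "\<sigma> a ` U \<subseteq> \<sigma> a ` U" by simp
          show "\<And>x. x \<in> \<sigma> a ` U \<Longrightarrow> \<sigma> a (f x) = x" using \<sigma>f[OF a(1)] .
          show "\<And>z. z \<in> U \<Longrightarrow> f (\<sigma> a z) = z" using f\<sigma>[OF a(1)] .
        qed
        then show "\<exists>q. homeomorphism u U f q" using a(2) by blast
      qed
    qed
  qed
qed


end
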